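(* Let $F\colon[0,+\infty)^N\to[0,+\infty)$ be a metric preserving function. Then for all $(s_i)_{i=1}^N,(s'_i)_{i=1}^N\in[0,+\infty)^N$: (1) $|F(s_1,\dots,s_N)-F(s'_1,\dots,s'_N)|\le F(|s_1-s'_1|,\dots,|s_N-s'_N|)$; (2) if $s_i\le 2s'_i$ for every $i$, then $F(s_1,\dots,s_N)\le 2F(s'_1,\dots,s'_N)$.
   Context: A function $F\colon[0,+\infty)^N\to[0,+\infty)$ is metric preserving if for any metric spaces $(X_1,d_1),\dots,(X_N,d_N)$, $d_F((x_i),(x'_i)):=F(d_1(x_1,x'_1),\dots,d_N(x_N,x'_N))$ is a metric on $X_1\times\cdots\times X_N$. *)

theory Defs
  imports "HOL-Analysis.Analysis"
begin

text \<open>Points of [0,+inf)^N are vectors s :: real^'n with nonnegative components,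
  where the finite index type 'n has N = CARD('n) elements.
  F is metric preserving if it maps [0,+inf)^N into [0,+inf) and, for every
  family of metric spaces (X i, d i) indexed by 'n, the function
  (x, x') |-> F (d_1 (x_1, x'_1), ..., d_N (x_N, x'_N)) is a metric on the product.
  The carriers of the factor metric spaces are taken to be subsets of the reals
  (every metric space of interest here is determined by at most three points,
  so this loses no generality).\<close>

definition nonneg_vec :: "real^'n \<Rightarrow> bool" where
  "nonneg_vec s \<longleftrightarrow> (\<forall>i. 0 \<le> s $ i)"

definition metric_preserving :: "(real^'n \<Rightarrow> real) \<Rightarrow> bool" where
  "metric_preserving F \<longleftrightarrow>
     (\<forall>s. nonneg_vec s \<longrightarrow> 0 \<le> F s) \<and>
     (\<forall>(X :: 'n \<Rightarrow> real set) (d :: 'n \<Rightarrow> real \<Rightarrow> real \<Rightarrow> real).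
        (\<forall>i. Metric_space (X i) (d i)) \<longrightarrow>
        Metric_space {x :: real^'n. \<forall>i. x $ i \<in> X i}
                     (\<lambda>x x'. F (\<chi> i. d i (x $ i) (x' $ i))))"

end

theory Submission
  imports Defs
begin

lemma tri_metric:
  fixes a b :: real
  assumes "0 \<le> a" "a \<le> 2 * b"
  shows "Metric_space {0::real, (if b = 0 then 0 else 1), (if a = 0 then 0 else 2)}
           (\<lambda>u v. if u = v then 0 else if u + v = 2 then a else b)"
  unfolding Metric_space_def using assms
  by (auto simp: add.commute split: if_splits)

theorem mainTheorem5:
  fixes F :: "real^'n \<Rightarrow> real"
  assumes "metric_preserving F"
  shows "\<forall>s s'. nonneg_vec s \<and> nonneg_vec s' \<longrightarrow>
           \<bar>F s - F s'\<bar> \<le> F (\<chi> i. \<bar>s $ i - s' $ i\<bar>)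
         \<and> ((\<forall>i. s $ i \<le> 2 * s' $ i) \<longrightarrow> F s \<le> 2 * F s')"
proof (intro allI impI conjI)
  fix s s' :: "real^'n"
  assume ns: "nonneg_vec s \<and> nonneg_vec s'"
  have MP: "\<And>X d. (\<forall>i. Metric_space (X i) (d i)) \<Longrightarrow>
        Metric_space {x :: real^'n. \<forall>i. x $ i \<in> X i} (\<lambda>x x'. F (\<chi> i. d i (x $ i) (x' $ i)))"
    using assms unfolding metric_preserving_def by blast
  have M1: "Metric_space {x :: real^'n. \<forall>i. x $ i \<in> (\<lambda>_. UNIV) i} (\<lambda>x x'. F (\<chi> i. (\<lambda>_. dist) i (x $ i) (x' $ i)))"
    by (rule MP) (simp add: Met_TC.Metric_space_axioms)
  have e1: "(\<chi> i. dist (s $ i) (0::real)) = s" "(\<chi> i. dist (s' $ i) (0::real)) = s'"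
    "(\<chi> i. dist (0::real) (s $ i)) = s" "(\<chi> i. dist (0::real) (s' $ i)) = s'"
    using ns by (auto simp: nonneg_vec_def dist_real_def vec_eq_iff)
  have e2: "(\<chi> i. dist (s $ i) (s' $ i)) = (\<chi> i. \<bar>s $ i - s' $ i\<bar>)"
    "(\<chi> i. dist (s' $ i) (s $ i)) = (\<chi> i. \<bar>s $ i - s' $ i\<bar>)"
    by (auto simp: dist_real_def vec_eq_iff abs_minus_commute)
  have t1: "F s \<le> F (\<chi> i. \<bar>s $ i - s' $ i\<bar>) + F s'"
    using Metric_space.triangle[OF M1, of s s' 0] e1 e2 by simp
  have t2: "F s' \<le> F (\<chi> i. \<bar>s $ i - s' $ i\<bar>) + F s"
    using Metric_space.triangle[OF M1, of s' s 0] e1 e2 by simp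
  show "\<bar>F s - F s'\<bar> \<le> F (\<chi> i. \<bar>s $ i - s' $ i\<bar>)" using t1 t2 by linarith
next
  fix s s' :: "real^'n"
  assume ns: "nonneg_vec s \<and> nonneg_vec s'" and le: "\<forall>i. s $ i \<le> 2 * s' $ i"
  have MP: "\<And>X d. (\<forall>i. Metric_space (X i) (d i)) \<Longrightarrow>
        Metric_space {x :: real^'n. \<forall>i. x $ i \<in> X i} (\<lambda>x x'. F (\<chi> i. d i (x $ i) (x' $ i)))"
    using assms unfolding metric_preserving_def by blast
  define X where "X = (\<lambda>i. {0::real, (if s' $ i = 0 then 0 else 1), (if s $ i = 0 then 0 else 2)})"
  define d where "d = (\<lambda>i (u::real) v. if u = v then 0 else if u + v = 2 then s $ i else s' $ i)"
  have M: "Metric_space {x :: real^'n. \<forall>i. x $ i \<in> X i} (\<lambda>x x'. F (\<chi> i. d i (x $ i) (x' $ i)))"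
    apply (rule MP)
    apply (rule allI)
    unfolding X_def d_def using ns le by (intro tri_metric) (auto simp: nonneg_vec_def)
  define x :: "real^'n" where "x = (\<chi> i. 0)"
  define y :: "real^'n" where "y = (\<chi> i. if s' $ i = 0 then 0 else 1)"
  define z :: "real^'n" where "z = (\<chi> i. if s $ i = 0 then 0 else 2)"
  have mem: "x \<in> {x. \<forall>i. x $ i \<in> X i}" "y \<in> {x. \<forall>i. x $ i \<in> X i}" "z \<in> {x. \<forall>i. x $ i \<in> X i}"
    by (auto simp: x_def y_def z_def X_def)
  have zero_s': "s $ i = 0" if "s' $ i = 0" for i
    using le ns that by (smt (verit) nonneg_vec_def)
  have dxz: "(\<chi> i. d i (x $ i) (z $ i)) = s"
    by (auto simp: vec_eq_iff d_def x_def z_def)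
  have dxy: "(\<chi> i. d i (x $ i) (y $ i)) = s'"
    by (auto simp: vec_eq_iff d_def x_def y_def)
  have dyz: "(\<chi> i. d i (y $ i) (z $ i)) = s'"
    using zero_s' by (auto simp: vec_eq_iff d_def y_def z_def)
  show "F s \<le> 2 * F s'"
    using Metric_space.triangle[OF M mem] dxz dxy dyz by simp
qed

end
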